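(* Let $k\geq 2$ be an integer and put $\psi=-\frac{1+x}{2x}$ and \[\gamma(x,0)=\frac{k}{1+3x}+\frac{2x}{(1+3x)^{2}}\cdot\frac{U_{k}(\psi)-U_{k-1}(\psi)-1}{U_{k}(\psi)}.\] Then the generating function $\sum_{n\geq 0} c_{n,k}x^n$, where $c_{n,k}$ is the number of cyclic Hertzsprung words of length $n$ over $k$, equals \[1+\frac{1-3x}{(1+3x)(1-x)}\left[\frac{1}{1-x\gamma(x,0)}+\frac{2x(k+1)}{(1-3x)U_{k}(\psi)}\left(\frac{1-x\,\frac{1+k-U_{k}(\psi)}{1+3x}}{1-x\gamma(x,0)}+U_{k-1}(\psi)-1\right)-kx-1\right].\]
   Context: For an integer $k\geq 2$, $[k]=\{1,\ldots,k\}$ and a word over $k$ of length $n$ is an element $w=w_1\cdots w_n\in[k]^n$ (including the empty word for $n=0$). $\mathrm{cs}(w)$ is the number of indices $0\leq i\leq n-1$ with $|w_{i+1}-w_i|\leq 1$, where $w_0$ means $w_n$ (for a word of length 1 this counts the pair $(w_1,w_1)$, so $\mathrm{cs}=1$; for the empty word $\mathrm{cs}=0$). A word $w$ is called cyclic Hertzsprung if $\mathrm{cs}(w)=0$. $U_n$ denotes the Chebyshev polynomial of the second kind: $U_0(x)=1$, $U_1(x)=2x$, $U_{n+1}(x)=2xU_n(x)-U_{n-1}(x)$. *)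

theory Defs
  imports Complex_Main
begin

fun chebU :: "nat \<Rightarrow> real \<Rightarrow> real" where
  "chebU 0 x = 1"
| "chebU (Suc 0) x = 2 * x"
| "chebU (Suc (Suc n)) x = 2 * x * chebU (Suc n) x - chebU n x"

text \<open>cs(w): number of cyclically adjacent positions whose letters differ by at most 1.
  With 0-based list indices, the pairs are (w!i, w!((i+1) mod n)) for i < n,
  which are exactly the pairs (w_i, w_{i+1}) for 0 \<le> i \<le> n-1 with w_0 = w_n.\<close>
definition cs :: "nat list \<Rightarrow> nat" where
  "cs w = card {i. i < length w \<and>
      \<bar>int (w ! ((i + 1) mod length w)) - int (w ! i)\<bar> \<le> 1}"

definition cyc_hertz_count :: "nat \<Rightarrow> nat \<Rightarrow> nat" where
  "cyc_hertz_count n k = card {w :: nat list. length w = n \<and> set w \<subseteq> {1..k} \<and> cs w = 0}"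

definition psi :: "real \<Rightarrow> real" where
  "psi x = - (1 + x) / (2 * x)"

definition gamma0 :: "nat \<Rightarrow> real \<Rightarrow> real" where
  "gamma0 k x = real k / (1 + 3 * x)
     + (2 * x / (1 + 3 * x)^2) *
       ((chebU k (psi x) - chebU (k - 1) (psi x) - 1) / chebU k (psi x))"

definition cyc_hertz_gf :: "nat \<Rightarrow> real \<Rightarrow> real" where
  "cyc_hertz_gf k x = 1 + (1 - 3 * x) / ((1 + 3 * x) * (1 - x)) *
     ( 1 / (1 - x * gamma0 k x)
       + (2 * x * (real k + 1)) / ((1 - 3 * x) * chebU k (psi x)) *
         ( (1 - x * ((1 + real k - chebU k (psi x)) / (1 + 3 * x))) / (1 - x * gamma0 k x)
           + chebU (k - 1) (psi x) - 1)
       - real k * x - 1)"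

end

theory Submission
  imports Defs
begin



lemma successively_nth:
  "successively P xs \<longleftrightarrow> (\<forall>i. Suc i < length xs \<longrightarrow> P (xs!i) (xs!Suc i))"
proof (induction P xs rule: successively.induct)
  case (3 P x y xs)
  show ?case
    apply (simp add: 3)
    apply (auto simp: All_less_Suc2)
    done
qed auto

definition farr :: "nat \<Rightarrow> nat \<Rightarrow> bool" where
  "farr p q \<longleftrightarrow> \<not> \<bar>int q - int p\<bar> \<le> 1"

fun Wc :: "nat \<Rightarrow> nat \<Rightarrow> nat \<Rightarrow> nat \<Rightarrow> nat" where
  "Wc k 0 a b = (if a = b then 1 else 0)"
| "Wc k (Suc n) a b = (\<Sum>c\<in>{c\<in>{1..k}. farr a c}. Wc k n c b)"

definition Ls :: "nat \<Rightarrow> nat \<Rightarrow> nat \<Rightarrow> nat \<Rightarrow> nat list set" where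
  "Ls k m a b = {v. length v = m \<and> set v \<subseteq> {1..k} \<and> successively farr (a # v @ [b])}"

lemma Ls_finite: "finite (Ls k m a b)"
proof -
  have "Ls k m a b \<subseteq> {v. set v \<subseteq> {1..k} \<and> length v = m}" unfolding Ls_def by auto
  moreover have "finite {v. set v \<subseteq> {1..k} \<and> length v = m}"
    by (rule finite_lists_length_eq) simp
  ultimately show ?thesis by (rule finite_subset)
qed

lemma Ls_Suc: "Ls k (Suc m) a b = (\<Union>c\<in>{c\<in>{1..k}. farr a c}. (#) c ` Ls k m c b)"
proof (intro equalityI subsetI)
  fix v assume "v \<in> Ls k (Suc m) a b"
  then obtain c v' where v: "v = c # v'" unfolding Ls_def by (cases v) auto
  with \<open>v \<in> Ls k (Suc m) a b\<close> show "v \<in> (\<Union>c\<in>{c\<in>{1..k}. farr a c}. (#) c ` Ls k m c b)"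
    unfolding Ls_def by auto
next
  fix v assume "v \<in> (\<Union>c\<in>{c\<in>{1..k}. farr a c}. (#) c ` Ls k m c b)"
  then show "v \<in> Ls k (Suc m) a b" unfolding Ls_def by auto
qed

lemma card_Ls: "b \<in> {1..k} \<Longrightarrow> card (Ls k m a b) = Wc k (Suc m) a b"
proof (induction m arbitrary: a)
  case 0
  have "Ls k 0 a b = (if farr a b then {[]} else {})" unfolding Ls_def by auto
  moreover have "{c\<in>{1..k}. farr a c} \<inter> {b} = (if farr a b then {b} else {})" using 0 by auto
  ultimately show ?case using 0
    by (simp add: sum.If_cases)
next
  case (Suc m)
  have "card (Ls k (Suc m) a b) = (\<Sum>c\<in>{c\<in>{1..k}. farr a c}. card ((#) c ` Ls k m c b))"
    unfolding Ls_Suc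
    by (rule card_UN_disjoint) (auto simp: Ls_finite)
  also have "\<dots> = (\<Sum>c\<in>{c\<in>{1..k}. farr a c}. Wc k (Suc m) c b)"
    by (rule sum.cong) (auto simp: card_image Suc.IH[OF Suc.prems] simp del: Wc.simps)
  finally show ?case by simp
qed

lemma cs_zero_iff:
  assumes "length v = m"
  shows "cs (a # v) = 0 \<longleftrightarrow> successively farr (a # v @ [a])"
proof -
  let ?w = "a # v"
  let ?n = "Suc m"
  have "cs ?w = 0 \<longleftrightarrow> (\<forall>i<?n. \<not> \<bar>int (?w ! ((i + 1) mod ?n)) - int (?w ! i)\<bar> \<le> 1)"
    unfolding cs_def using assms by auto
  also have "\<dots> \<longleftrightarrow> (\<forall>i<?n. farr ((a # v @ [a])!i) ((a # v @ [a])!Suc i))"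
  proof -
    have "\<And>i. i < ?n \<Longrightarrow> (a # v @ [a])!i = ?w!i"
      using assms by (auto simp: nth_append nth_Cons split: nat.splits)
    moreover have "\<And>i. i < ?n \<Longrightarrow> (a # v @ [a])!Suc i = ?w!((i + 1) mod ?n)"
    proof -
      fix i assume i: "i < ?n"
      show "(a # v @ [a])!Suc i = ?w!((i + 1) mod ?n)"
      proof (cases "Suc i = ?n")
        case True
        then show ?thesis using assms by (simp add: nth_append)
      next
        case False
        then have "Suc i < ?n" using i by simp
        then show ?thesis using assms by (simp add: nth_append)
      qed
    qed
    ultimately show ?thesis unfolding farr_def by auto
  qed
  also have "\<dots> \<longleftrightarrow> successively farr (a # v @ [a])"
    unfolding successively_nth using assms by auto
  finally show ?thesis .
qed

lemma count_Suc:
  "cyc_hertz_count (Suc m) k = (\<Sum>a\<in>{1..k}. Wc k (Suc m) a a)"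
proof -
  have "{w :: nat list. length w = Suc m \<and> set w \<subseteq> {1..k} \<and> cs w = 0}
        = (\<Union>a\<in>{1..k}. (#) a ` Ls k m a a)"
  proof (intro equalityI subsetI)
    fix w assume "w \<in> {w :: nat list. length w = Suc m \<and> set w \<subseteq> {1..k} \<and> cs w = 0}"
    then obtain a v where w: "w = a # v" "length v = m" "a \<in> {1..k}" "set v \<subseteq> {1..k}" "cs (a#v) = 0"
      by (cases w) auto
    then show "w \<in> (\<Union>a\<in>{1..k}. (#) a ` Ls k m a a)"
      using cs_zero_iff[OF w(2)] unfolding Ls_def by auto
  next
    fix w assume "w \<in> (\<Union>a\<in>{1..k}. (#) a ` Ls k m a a)"
    then obtain a v where w: "w = a # v" "a \<in> {1..k}" "v \<in> Ls k m a a" by auto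
    then show "w \<in> {w :: nat list. length w = Suc m \<and> set w \<subseteq> {1..k} \<and> cs w = 0}"
      using cs_zero_iff[of v m a] unfolding Ls_def by auto
  qed
  then have "cyc_hertz_count (Suc m) k = card (\<Union>a\<in>{1..k}. (#) a ` Ls k m a a)"
    unfolding cyc_hertz_count_def by simp
  also have "\<dots> = (\<Sum>a\<in>{1..k}. card ((#) a ` Ls k m a a))"
    by (rule card_UN_disjoint) (auto simp: Ls_finite)
  also have "\<dots> = (\<Sum>a\<in>{1..k}. Wc k (Suc m) a a)"
    by (rule sum.cong) (auto simp: card_image card_Ls)
  finally show ?thesis .
qed

lemma count_0: "cyc_hertz_count 0 k = 1"
proof -
  have "{w :: nat list. length w = 0 \<and> set w \<subseteq> {1..k} \<and> cs w = 0} = {[]}"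
    by (auto simp: cs_def)
  then show ?thesis unfolding cyc_hertz_count_def by simp
qed

lemma Wc_bound: "Wc k n a b \<le> k ^ n"
proof (induction n arbitrary: a)
  case 0 then show ?case by simp
next
  case (Suc n)
  have "Wc k (Suc n) a b = (\<Sum>c\<in>{c\<in>{1..k}. farr a c}. Wc k n c b)" by simp
  also have "\<dots> \<le> (\<Sum>c\<in>{c\<in>{1..k}. farr a c}. k ^ n)"
    by (rule sum_mono) (rule Suc)
  also have "\<dots> = card {c\<in>{1..k}. farr a c} * k ^ n" by simp
  also have "\<dots> \<le> k * k ^ n"
  proof -
    have "card {c\<in>{1..k}. farr a c} \<le> card {1..k}" by (rule card_mono) auto
    then show ?thesis by simp
  qed
  finally show ?case by simp
qed




fun Vm :: "real \<Rightarrow> nat \<Rightarrow> real" where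
  "Vm t 0 = 0"
| "Vm t (Suc 0) = 1"
| "Vm t (Suc (Suc n)) = 2 * t * Vm t (Suc n) - Vm t n"

lemma chebU_Vm: "chebU n t = Vm t (Suc n)"
  by (induction n t rule: chebU.induct) auto

lemma Vm_add_aux:
  "Vm t (Suc i) * Vm t (Suc j) - Vm t i * Vm t j = Vm t (Suc (i+j)) \<and>
   Vm t (Suc (Suc i)) * Vm t (Suc j) - Vm t (Suc i) * Vm t j = Vm t (Suc (Suc i+j))"
proof (induction i)
  case 0
  then show ?case by simp
next
  case (Suc i)
  then have h1: "Vm t (Suc i) * Vm t (Suc j) - Vm t i * Vm t j = Vm t (Suc (i+j))"
    and h2: "Vm t (Suc (Suc i)) * Vm t (Suc j) - Vm t (Suc i) * Vm t j = Vm t (Suc (Suc i+j))"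
    by auto
  have "Vm t (Suc (Suc (Suc i))) * Vm t (Suc j) - Vm t (Suc (Suc i)) * Vm t j
     = 2*t*(Vm t (Suc (Suc i)) * Vm t (Suc j) - Vm t (Suc i) * Vm t j)
       - (Vm t (Suc i) * Vm t (Suc j) - Vm t i * Vm t j)"
    by (simp add: algebra_simps)
  also have "\<dots> = Vm t (Suc (Suc (Suc i) + j))" using h1 h2 by simp
  finally show ?case using h2 by simp
qed

lemma Vm_add: "Vm t (Suc i) * Vm t (Suc j) - Vm t i * Vm t j = Vm t (Suc (i+j))"
  using Vm_add_aux by blast

lemma cassini: "Vm t (Suc n)^2 - Vm t n * Vm t (Suc (Suc n)) = 1"
proof (induction n)
  case 0 then show ?case by simp
next
  case (Suc n)
  then show ?case by (simp add: power2_eq_square algebra_simps)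
qed

lemma S1: "2*(t-1) * (\<Sum>a=1..n. Vm t a) = Vm t (Suc n) - Vm t n - 1"
proof (induction n)
  case 0 then show ?case by simp
next
  case (Suc n)
  have "2*(t-1) * (\<Sum>a=1..Suc n. Vm t a) = 2*(t-1) * (\<Sum>a=1..n. Vm t a) + 2*(t-1)* Vm t (Suc n)"
    by (simp add: algebra_simps)
  then show ?case using Suc by (simp add: algebra_simps)
qed

lemma S3: "2*(1-t^2) * (\<Sum>a=1..n. Vm t a ^ 2) = real n - Vm t n * (Vm t (Suc (Suc n)) - Vm t n) / 2"
proof (induction n)
  case 0 then show ?case by simp
next
  case (Suc n)
  have c1: "Vm t (Suc n)^2 - Vm t n * Vm t (Suc (Suc n)) = 1" by (rule cassini)
  have "2*(1-t^2) * (\<Sum>a=1..Suc n. Vm t a ^ 2) = 2*(1-t^2) * (\<Sum>a=1..n. Vm t a ^ 2) + 2*(1-t^2)* Vm t (Suc n)^2"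
    by (simp add: algebra_simps)
  also have "\<dots> = real n - Vm t n * (Vm t (Suc (Suc n)) - Vm t n) / 2 + 2*(1-t^2)* Vm t (Suc n)^2"
    using Suc by simp
  also have "\<dots> = real (Suc n) - Vm t (Suc n) * (Vm t (Suc (Suc (Suc n))) - Vm t (Suc n)) / 2"
    using c1 by simp algebra
  finally show ?case .
qed

definition cv :: "real \<Rightarrow> nat \<Rightarrow> real" where
  "cv t n = (\<Sum>a\<le>n. Vm t a * Vm t (n - a))"

lemma cv_rec: "cv t (Suc (Suc n)) = 2*t*cv t (Suc n) - cv t n + Vm t (Suc n)"
proof -
  have "cv t (Suc (Suc n)) = (\<Sum>a\<le>n. Vm t a * Vm t (Suc (Suc n) - a)) + Vm t (Suc n)"
    unfolding cv_def by simp
  also have "(\<Sum>a\<le>n. Vm t a * Vm t (Suc (Suc n) - a))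
     = (\<Sum>a\<le>n. 2*t*(Vm t a * Vm t (Suc n - a)) - Vm t a * Vm t (n - a))"
  proof (rule sum.cong)
    fix a assume "a \<in> {..n}"
    then have "Suc (Suc n) - a = Suc (Suc (n - a))" "Suc n - a = Suc (n - a)" by auto
    then show "Vm t a * Vm t (Suc (Suc n) - a) = 2*t*(Vm t a * Vm t (Suc n - a)) - Vm t a * Vm t (n - a)"
      by (simp add: algebra_simps)
  qed simp
  also have "\<dots> = 2*t*(\<Sum>a\<le>n. Vm t a * Vm t (Suc n - a)) - cv t n"
    unfolding cv_def by (simp add: sum_subtractf sum_distrib_left)
  also have "(\<Sum>a\<le>n. Vm t a * Vm t (Suc n - a)) = cv t (Suc n)"
    unfolding cv_def by simp
  finally show ?thesis by simp
qed

lemma cv_closed_aux: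
  "2*(1-t^2) * cv t (Suc n) = (real n + 1) * Vm t n - real n * t * Vm t (Suc n) \<and>
   2*(1-t^2) * cv t (Suc (Suc n)) = (real n + 2) * Vm t (Suc n) - (real n + 1) * t * Vm t (Suc (Suc n))"
proof (induction n)
  case 0
  then show ?case by (simp add: cv_def power2_eq_square algebra_simps)
next
  case (Suc n)
  then have h1: "2*(1-t^2) * cv t (Suc n) = (real n + 1) * Vm t n - real n * t * Vm t (Suc n)"
    and h2: "2*(1-t^2) * cv t (Suc (Suc n)) = (real n + 2) * Vm t (Suc n) - (real n + 1) * t * Vm t (Suc (Suc n))"
    by auto
  have "2*(1-t^2) * cv t (Suc (Suc (Suc n))) = 2*t*(2*(1-t^2) * cv t (Suc (Suc n))) - 2*(1-t^2) * cv t (Suc n) + 2*(1-t^2)*Vm t (Suc (Suc n))"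
    by (simp add: cv_rec algebra_simps)
  also have "\<dots> = (real (Suc n) + 2) * Vm t (Suc (Suc n)) - (real (Suc n) + 1) * t * Vm t (Suc (Suc (Suc n)))"
    unfolding h1 h2 by (simp add: power2_eq_square algebra_simps)
  finally show ?case using h2 by (simp add: algebra_simps)
qed

lemma conv_closed:
  "2*(1-t^2) * (\<Sum>a=1..n. Vm t a * Vm t (Suc n - a)) = (real n + 1) * Vm t n - real n * t * Vm t (Suc n)"
proof -
  have "cv t (Suc n) = (\<Sum>a=1..n. Vm t a * Vm t (Suc n - a))"
  proof -
    have "cv t (Suc n) = (\<Sum>a\<le>n. Vm t a * Vm t (Suc n - a))" unfolding cv_def by simp
    also have "\<dots> = (\<Sum>a\<in>{1..n}. Vm t a * Vm t (Suc n - a))"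
      by (rule sum.mono_neutral_right) (auto simp: not_le)
    finally show ?thesis .
  qed
  then show ?thesis using cv_closed_aux[of t n] by simp
qed

lemma Vm_mono: "\<bar>t\<bar> \<ge> 1 \<Longrightarrow> \<bar>Vm t n\<bar> \<le> \<bar>Vm t (Suc n)\<bar>"
proof (induction n rule: nat_less_induct)
  case (1 n)
  show ?case
  proof (cases n)
    case 0 then show ?thesis by simp
  next
    case (Suc m)
    have ih: "\<bar>Vm t m\<bar> \<le> \<bar>Vm t (Suc m)\<bar>" using 1 Suc by auto
    have "\<bar>Vm t (Suc (Suc m))\<bar> \<ge> \<bar>2*t*Vm t (Suc m)\<bar> - \<bar>Vm t m\<bar>" by simp
    moreover have "\<bar>2*t*Vm t (Suc m)\<bar> \<ge> 2 * \<bar>Vm t (Suc m)\<bar>"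
      using 1(2) by (simp add: abs_mult mult_right_mono)
    ultimately show ?thesis using ih unfolding Suc by linarith
  qed
qed

lemma Vm_mono_le: assumes "\<bar>t\<bar> \<ge> 1" "m \<le> n" shows "\<bar>Vm t m\<bar> \<le> \<bar>Vm t n\<bar>"
  using assms(2) by (induction rule: dec_induct) (auto intro: order_trans Vm_mono[OF assms(1)])

lemma Vm_ge1: "\<bar>t\<bar> \<ge> 1 \<Longrightarrow> \<bar>Vm t (Suc n)\<bar> \<ge> 1"
  using Vm_mono_le[of t 1 "Suc n"] by simp




definition bet :: "real \<Rightarrow> real \<Rightarrow> nat \<Rightarrow> nat \<Rightarrow> nat \<Rightarrow> real" where
  "bet t x k a b = - Vm t (min a b) * Vm t (Suc k - max a b) / (x * Vm t (Suc k))"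

definition uu :: "real \<Rightarrow> real \<Rightarrow> nat \<Rightarrow> nat \<Rightarrow> real" where
  "uu t x k a = (1 - (Vm t a + Vm t (Suc k - a)) / Vm t (Suc k)) / (1 + 3*x)"

definition ss :: "real \<Rightarrow> real \<Rightarrow> nat \<Rightarrow> real" where
  "ss t x k = (\<Sum>a=1..k. uu t x k a)"

definition mm :: "real \<Rightarrow> real \<Rightarrow> nat \<Rightarrow> nat \<Rightarrow> nat \<Rightarrow> real" where
  "mm t x k a b = bet t x k a b + x * uu t x k a * uu t x k b / (1 - x * ss t x k)"

declare Vm.simps(3)[simp del]

lemma Vm_rec: "Vm t (Suc (Suc n)) = 2 * t * Vm t (Suc n) - Vm t n" by (rule Vm.simps(3))

locale sysl =
  fixes t x :: real and k :: nat
  assumes hx: "2*t*x = -(1+x)" and x0: "x \<noteq> 0" and P0: "Vm t (Suc k) \<noteq> 0"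
    and r0: "1 + 3*x \<noteq> 0" and D0: "1 - x * ss t x k \<noteq> 0"
begin

abbreviation "V \<equiv> Vm t"
abbreviation "P \<equiv> Vm t (Suc k)"

lemma hom: "x * V n + (1+x) * V (Suc n) + x * V (Suc (Suc n)) = 0"
  using hx Vm_rec[of t n] by algebra

lemma bet_sym: "bet t x k a b = bet t x k b a"
  unfolding bet_def by (simp add: min.commute max.commute)

lemma bet_0: "bet t x k a 0 = 0" unfolding bet_def by simp

lemma bet_top: "a \<le> Suc k \<Longrightarrow> bet t x k a (Suc k) = 0" unfolding bet_def by (simp add: max_def)

lemma bet_0': "bet t x k 0 b = 0" unfolding bet_def by simp

lemma bet_top': "b \<le> Suc k \<Longrightarrow> bet t x k (Suc k) b = 0" unfolding bet_def by (simp add: max_def)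

lemma uu_0: "uu t x k 0 = 0" unfolding uu_def using P0 by simp

lemma uu_top: "uu t x k (Suc k) = 0" unfolding uu_def using P0 by simp

lemma bet_row:
  assumes a: "a \<in> {1..k}" and b: "b \<in> {1..k}"
  shows "x * bet t x k (a-1) b + (1+x) * bet t x k a b + x * bet t x k (a+1) b = (if a = b then 1 else 0)"
proof -
  obtain a' where a': "a = Suc a'" using a by (cases a) auto
  consider "a < b" | "a = b" | "a > b" by linarith
  then show ?thesis
  proof cases
    case 1
    define c where "c = - V (Suc k - b) / (x * P)"
    have "bet t x k (a-1) b = V a' * c" "bet t x k a b = V (Suc a') * c" "bet t x k (a+1) b = V (Suc (Suc a')) * c"
    proof -
      have m: "min (a-1) b = a'" "max (a-1) b = b" "min a b = Suc a'" "max a b = b" "min (a+1) b = Suc (Suc a')" "max (a+1) b = b"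
        using 1 a' by auto
      show "bet t x k (a-1) b = V a' * c" "bet t x k a b = V (Suc a') * c" "bet t x k (a+1) b = V (Suc (Suc a')) * c"
        unfolding bet_def c_def m by simp_all
    qed
    then have "x * bet t x k (a-1) b + (1+x) * bet t x k a b + x * bet t x k (a+1) b
      = (x * V a' + (1+x) * V (Suc a') + x * V (Suc (Suc a'))) * c"
      by (simp add: algebra_simps)
    also have "\<dots> = 0" using hom by simp
    finally show ?thesis using 1 by simp
  next
    case 3
    obtain r where r: "k - a = r" by simp
    have e: "Suc k - (a - 1) = Suc (Suc r)" "Suc k - a = Suc r" "Suc k - (a+1) = r" using r a a' by auto
    define c where "c = - V b / (x * P)"
    have "bet t x k (a-1) b = V (Suc (Suc r)) * c" "bet t x k a b = V (Suc r) * c" "bet t x k (a+1) b = V r * c"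
    proof -
      have m: "min (a-1) b = b" "max (a-1) b = a - 1" "min a b = b" "max a b = a" "min (a+1) b = b" "max (a+1) b = a+1"
        using 3 a' by auto
      show "bet t x k (a-1) b = V (Suc (Suc r)) * c" "bet t x k a b = V (Suc r) * c" "bet t x k (a+1) b = V r * c"
        unfolding bet_def c_def m e by simp_all
    qed
    then have "x * bet t x k (a-1) b + (1+x) * bet t x k a b + x * bet t x k (a+1) b
      = (x * V r + (1+x) * V (Suc r) + x * V (Suc (Suc r))) * c"
      by (simp add: algebra_simps)
    also have "\<dots> = 0" using hom by simp
    finally show ?thesis using 3 by simp
  next
    case 2
    obtain r where r: "k - a = r" by simp
    have e: "Suc k - a = Suc r" "Suc k - Suc a = r" "k = a + r" using r a a' by auto
    have add: "V (Suc a) * V (Suc r) - V a * V r = P" using Vm_add[of t a r] e by simp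
    define c where "c = - 1 / (x * P)"
    have "bet t x k (a-1) b = V a' * V (Suc r) * c" "bet t x k a b = V (Suc a') * V (Suc r) * c"
        "bet t x k (a+1) b = V (Suc a') * V r * c"
    proof -
      have m: "min (a-1) b = a'" "max (a-1) b = a" "min a b = a" "max a b = a" "min (a+1) b = a" "max (a+1) b = Suc a"
        using 2 a' by auto
      show "bet t x k (a-1) b = V a' * V (Suc r) * c" "bet t x k a b = V (Suc a') * V (Suc r) * c"
        "bet t x k (a+1) b = V (Suc a') * V r * c"
        unfolding bet_def m e c_def using a' by simp_all
    qed
    then have "x * bet t x k (a-1) b + (1+x) * bet t x k a b + x * bet t x k (a+1) b
      = - (x * V a' * V (Suc r) + (1+x) * V (Suc a') * V (Suc r) + x * V (Suc a') * V r) / (x * P)"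
      unfolding c_def by (simp add: algebra_simps add_divide_distrib diff_divide_distrib)
    also have "x * V a' * V (Suc r) + (1+x) * V (Suc a') * V (Suc r) = - x * V (Suc (Suc a')) * V (Suc r)"
      using hom[of a'] by algebra
    also have "- (- x * V (Suc (Suc a')) * V (Suc r) + x * V (Suc a') * V r) / (x * P) = 1"
      using add a' x0 P0 by (simp add: field_simps)
    finally show ?thesis using 2 by simp
  qed
qed

lemma uu_row:
  assumes a: "a \<in> {1..k}"
  shows "x * uu t x k (a-1) + (1+x) * uu t x k a + x * uu t x k (a+1) = 1"
proof -
  obtain a' where a': "a = Suc a'" using a by (cases a) auto
  obtain r where r: "k - a = r" by simp
  have e: "Suc k - (a - 1) = Suc (Suc r)" "Suc k - a = Suc r" "Suc k - (a+1) = r" using r a a' by auto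
  have "x * uu t x k (a-1) + (1+x) * uu t x k a + x * uu t x k (a+1)
     = ((1 + 3*x) - ((x * V a' + (1+x) * V (Suc a') + x * V (Suc (Suc a')))
          + (x * V r + (1+x) * V (Suc r) + x * V (Suc (Suc r)))) / P) / (1 + 3*x)"
    unfolding uu_def using a' e P0 r0 by (simp add: divide_simps) (simp add: algebra_simps)
  also have "\<dots> = 1" using hom[of a'] hom[of r] r0 by simp
  finally show ?thesis .
qed

lemma hom_unique:
  assumes rows: "\<And>b. b \<in> {1..k} \<Longrightarrow> x * d (b-1) + (1+x) * d b + x * d (b+1) = 0"
    and d0: "d 0 = 0" and n: "n \<le> Suc k"
  shows "d n = d 1 * V n"
proof -
  have "n \<le> k \<longrightarrow> d n = d 1 * V n \<and> d (Suc n) = d 1 * V (Suc n)" for n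
  proof (induction n)
    case 0
    then show ?case using d0 by simp
  next
    case (Suc m)
    show ?case
    proof
      assume m: "Suc m \<le> k"
      then have i1: "d m = d 1 * V m" and i2: "d (Suc m) = d 1 * V (Suc m)" using Suc by auto
      have r: "x * d m + (1+x) * d (Suc m) + x * d (Suc (Suc m)) = 0"
        using rows[of "Suc m"] m by simp
      have "x * d (Suc (Suc m)) = - (x * d m + (1+x) * d (Suc m))" using r by simp
      also have "\<dots> = d 1 * (- (x * V m + (1+x) * V (Suc m)))" unfolding i1 i2 by (simp add: algebra_simps)
      also have "- (x * V m + (1+x) * V (Suc m)) = x * V (Suc (Suc m))" using hom[of m] by simp
      finally have "x * d (Suc (Suc m)) = x * (d 1 * V (Suc (Suc m)))" by simp
      then show "d (Suc m) = d 1 * V (Suc m) \<and> d (Suc (Suc m)) = d 1 * V (Suc (Suc m))"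
        using x0 i2 by simp
    qed
  qed
  note A = this
  show ?thesis
  proof (cases n)
    case 0 then show ?thesis using d0 by simp
  next
    case (Suc m)
    then have "m \<le> k" using n by simp
    then show ?thesis using A[of m] Suc by simp
  qed
qed

lemma colsum: assumes b: "b \<in> {1..k}" shows "(\<Sum>c=1..k. bet t x k c b) = uu t x k b"
proof -
  define d where "d b = uu t x k b - (\<Sum>c=1..k. bet t x k c b)" for b
  have d0: "d 0 = 0" unfolding d_def using uu_0 bet_0 by simp
  have dtop: "d (Suc k) = 0" unfolding d_def using uu_top bet_top by simp
  have drow: "x * d (b-1) + (1+x) * d b + x * d (b+1) = 0" if b: "b \<in> {1..k}" for b
  proof -
    have "(\<Sum>c=1..k. x * bet t x k c (b-1) + (1+x) * bet t x k c b + x * bet t x k c (b+1))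
        = (\<Sum>c=1..k. (if b = c then 1 else 0))"
    proof (rule sum.cong)
      fix c assume c: "c \<in> {1..k}"
      show "x * bet t x k c (b-1) + (1+x) * bet t x k c b + x * bet t x k c (b+1) = (if b = c then 1 else 0)"
        using bet_row[OF b c] bet_sym[of c "b-1"] bet_sym[of c b] bet_sym[of c "b+1"] by simp
    qed simp
    also have "\<dots> = 1" using b by simp
    finally have "(\<Sum>c=1..k. x * bet t x k c (b-1) + (1+x) * bet t x k c b + x * bet t x k c (b+1)) = 1" .
    then have "x * (\<Sum>c=1..k. bet t x k c (b-1)) + (1+x) * (\<Sum>c=1..k. bet t x k c b) + x * (\<Sum>c=1..k. bet t x k c (b+1)) = 1"
      by (simp add: sum.distrib sum_distrib_left)
    then show ?thesis unfolding d_def using uu_row[OF b] by (simp add: algebra_simps)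
  qed
  have dV: "n \<le> Suc k \<Longrightarrow> d n = d 1 * V n" for n
    using hom_unique[of d n] drow d0 by blast
  have "d 1 = 0" using dV[of "Suc k"] dtop P0 by simp
  then have "d b = 0" using dV[of b] b by simp
  then show ?thesis unfolding d_def by simp
qed


lemma mm_0: "mm t x k 0 b = 0" unfolding mm_def using bet_0' uu_0 by simp

lemma mm_top: "b \<le> Suc k \<Longrightarrow> mm t x k (Suc k) b = 0" unfolding mm_def using bet_top' uu_top by simp

lemma mm_sum:
  assumes b: "b \<in> {1..k}"
  shows "(\<Sum>c=1..k. mm t x k c b) = uu t x k b / (1 - x * ss t x k)"
proof -
  define K where "K = x * uu t x k b / (1 - x * ss t x k)"
  have mk: "mm t x k c b = bet t x k c b + uu t x k c * K" for c
    unfolding mm_def K_def by simp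
  have "(\<Sum>c=1..k. mm t x k c b) = (\<Sum>c=1..k. bet t x k c b) + (x * uu t x k b / (1 - x * ss t x k)) * (\<Sum>c=1..k. uu t x k c)"
  proof -
    have "(\<Sum>c=1..k. uu t x k c * K) = (\<Sum>c=1..k. uu t x k c) * K" by (rule sum_distrib_right[symmetric])
    then show ?thesis unfolding mk sum.distrib K_def by (simp add: mult.commute)
  qed
  also have "\<dots> = uu t x k b + (x * uu t x k b / (1 - x * ss t x k)) * ss t x k"
    unfolding colsum[OF b] ss_def ..
  also have "\<dots> = uu t x k b / (1 - x * ss t x k)"
    using D0 by (simp add: field_simps)
  finally show ?thesis .
qed

lemma mm_row3:
  assumes a: "a \<in> {1..k}" and b: "b \<in> {1..k}"
  shows "x * mm t x k (a-1) b + (1+x) * mm t x k a b + x * mm t x k (a+1) b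
     = (if a = b then 1 else 0) + x * uu t x k b / (1 - x * ss t x k)"
proof -
  have "x * mm t x k (a-1) b + (1+x) * mm t x k a b + x * mm t x k (a+1) b
     = (x * bet t x k (a-1) b + (1+x) * bet t x k a b + x * bet t x k (a+1) b)
       + (x * uu t x k (a-1) + (1+x) * uu t x k a + x * uu t x k (a+1)) * (x * uu t x k b / (1 - x * ss t x k))"
  proof -
    define K where "K = x * uu t x k b / (1 - x * ss t x k)"
    have mk: "mm t x k c b = bet t x k c b + uu t x k c * K" for c
      unfolding mm_def K_def by simp
    show ?thesis unfolding mk K_def[symmetric] by (simp add: algebra_simps)
  qed
  then show ?thesis using bet_row[OF a b] uu_row[OF a] by simp
qed

end

lemma near_sum:
  fixes g :: "nat \<Rightarrow> real"
  assumes g0: "g 0 = 0" and gk: "g (Suc k) = 0" and a: "a \<in> {1..k}"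
  shows "(\<Sum>c\<in>{c\<in>{1..k}. farr a c}. g c) = (\<Sum>c=1..k. g c) - (g (a-1) + g a + g (a+1))"
proof -
  define N where "N = {c\<in>{1..k}. \<not> farr a c}"
  have split: "(\<Sum>c=1..k. g c) = (\<Sum>c\<in>{c\<in>{1..k}. farr a c}. g c) + (\<Sum>c\<in>N. g c)"
  proof -
    have "{1..k} = {c\<in>{1..k}. farr a c} \<union> N" unfolding N_def by auto
    moreover have "{c\<in>{1..k}. farr a c} \<inter> N = {}" unfolding N_def by auto
    ultimately show ?thesis by (metis finite_Un finite_atLeastAtMost sum.union_disjoint)
  qed
  have NT: "N \<subseteq> {a-1, a, a+1}" unfolding N_def farr_def by auto
  have TN: "\<forall>c\<in>{a-1, a, a+1} - N. g c = 0"
  proof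
    fix c assume c: "c \<in> {a-1, a, a+1} - N"
    then have "\<bar>int c - int a\<bar> \<le> 1" using a by auto
    then have "c \<notin> {1..k}" using c unfolding N_def farr_def by auto
    then have "c = 0 \<or> c = Suc k" using c a by auto
    then show "g c = 0" using g0 gk by auto
  qed
  have "(\<Sum>c\<in>N. g c) = (\<Sum>c\<in>{a-1, a, a+1}. g c)"
    by (rule sum.mono_neutral_left) (use NT TN in auto)
  also have "\<dots> = g (a-1) + g a + g (a+1)"
  proof -
    obtain a' where a': "a = Suc a'" using a by (cases a) auto
    show ?thesis unfolding a' by simp
  qed
  finally show ?thesis using split by simp
qed

context sysl begin

lemma mm_row:
  assumes a: "a \<in> {1..k}" and b: "b \<in> {1..k}"
  shows "mm t x k a b = (if a = b then 1 else 0) + x * (\<Sum>c\<in>{c\<in>{1..k}. farr a c}. mm t x k c b)"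
proof -
  have "(\<Sum>c\<in>{c\<in>{1..k}. farr a c}. mm t x k c b)
      = (\<Sum>c=1..k. mm t x k c b) - (mm t x k (a-1) b + mm t x k a b + mm t x k (a+1) b)"
    by (rule near_sum) (use mm_0 mm_top b a in auto)
  define S where "S = (\<Sum>c\<in>{c\<in>{1..k}. farr a c}. mm t x k c b)"
  define U where "U = uu t x k b / (1 - x * ss t x k)"
  define \<delta> where "\<delta> = (if a = b then 1 else (0::real))"
  have e1: "S = U - (mm t x k (a-1) b + mm t x k a b + mm t x k (a+1) b)"
    using \<open>(\<Sum>c\<in>{c\<in>{1..k}. farr a c}. mm t x k c b) = _\<close> mm_sum[OF b] unfolding S_def U_def by simp
  have e2: "x * mm t x k (a-1) b + (1+x) * mm t x k a b + x * mm t x k (a+1) b = \<delta> + x * U"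
    using mm_row3[OF a b] unfolding \<delta>_def U_def by simp
  have "x * S = x * U - x * (mm t x k (a-1) b + mm t x k a b + mm t x k (a+1) b)"
    unfolding e1 by (simp add: algebra_simps)
  then have "mm t x k a b = \<delta> + x * S" using e2 by (simp add: algebra_simps)
  then show ?thesis unfolding S_def \<delta>_def .
qed

end




lemma final_id:
  fixes x kr P Q t S1 S3 C :: real
  assumes x0: "x \<noteq> 0" and r0: "1 + 3*x \<noteq> 0" and m1: "1 - x \<noteq> 0" and r3: "1 - 3*x \<noteq> 0"
    and P0: "P \<noteq> 0"
    and ht: "t = -(1+x)/(2*x)"
    and D0: "1 - x * ((kr - 2*S1/P)/(1+3*x)) \<noteq> 0"
    and hS1: "2*(t-1)*S1 = P - Q - 1"
    and hS3: "2*(1-t^2)*S3 = kr - Q*((2*t*P - Q) - Q)/2"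
    and hC: "2*(1-t^2)*C = (kr+1)*Q - kr*t*P"
    and cas: "P^2 - Q*(2*t*P - Q) = 1"
  shows "- C/(x*P) + x * ((kr - 4*S1/P + (2*S3 + 2*C)/P^2)/(1+3*x)^2) / (1 - x * ((kr - 2*S1/P)/(1+3*x))) + 1 - kr
    = 1 + (1 - 3 * x) / ((1 + 3 * x) * (1 - x)) *
     ( 1 / (1 - x * (kr / (1 + 3 * x) + (2 * x / (1 + 3 * x)^2) * ((P - Q - 1) / P)))
       + (2 * x * (kr + 1)) / ((1 - 3 * x) * P) *
         ( (1 - x * ((1 + kr - P) / (1 + 3 * x))) / (1 - x * (kr / (1 + 3 * x) + (2 * x / (1 + 3 * x)^2) * ((P - Q - 1) / P)))
           + Q - 1)
       - kr * x - 1)"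
proof -
  have tm1: "t - 1 = -(1+3*x)/(2*x)" using ht x0 by (simp add: field_simps)
  have t2: "1 - t^2 = (1+3*x)*(x-1)/(4*x^2)" using x0 unfolding ht by (simp add: field_simps power2_eq_square)
  have S1e: "S1 = -x*(P - Q - 1)/(1+3*x)" using hS1 tm1 x0 r0 by (simp add: field_simps)
  have nz: "1 - t^2 \<noteq> 0" unfolding t2 using x0 r0 m1 by simp
  have S3e: "S3 = (kr - Q*((2*t*P - Q) - Q)/2) * (2*x^2) / ((1+3*x)*(x-1))"
  proof -
    have "S3 = (kr - Q*((2*t*P - Q) - Q)/2) / (2*(1-t^2))" using hS3 nz by (simp add: eq_divide_eq mult.commute)
    also have "\<dots> = (kr - Q*((2*t*P - Q) - Q)/2) * (2*x^2) / ((1+3*x)*(x-1))"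
      unfolding t2 using x0 by (simp add: power2_eq_square)
    finally show ?thesis .
  qed
  have Ce: "C = ((kr+1)*Q - kr*t*P) * (2*x^2) / ((1+3*x)*(x-1))"
  proof -
    have "C = ((kr+1)*Q - kr*t*P) / (2*(1-t^2))" using hC nz by (simp add: eq_divide_eq mult.commute)
    also have "\<dots> = ((kr+1)*Q - kr*t*P) * (2*x^2) / ((1+3*x)*(x-1))"
      unfolding t2 using x0 by (simp add: power2_eq_square)
    finally show ?thesis .
  qed
  define r where "r = 1 + 3*x"
  define m where "m = 1 - x"
  define r3 where "r3 = 1 - 3*x"
  have r0': "r \<noteq> 0" "m \<noteq> 0" "r3 \<noteq> 0" using r0 m1 r3 unfolding r_def m_def r3_def by auto
  have S1e': "S1 = -x*(P - Q - 1)/r" unfolding r_def using S1e .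
  have S3e': "S3 = (kr - Q*((2*t*P - Q) - Q)/2) * (2*x^2) / (-(r*m))"
    unfolding S3e r_def m_def by (simp add: algebra_simps)
  have Ce': "C = ((kr+1)*Q - kr*t*P) * (2*x^2) / (-(r*m))"
    unfolding Ce r_def m_def by (simp add: algebra_simps)
  have gam: "(kr - 2*S1/P)/r = kr / r + (2 * x / r^2) * ((P - Q - 1) / P)"
    unfolding S1e' using r0' P0 by (simp add: field_simps power2_eq_square)
  define Gp where "Gp = r^2 * P - x * (kr*r*P + 2*x*(P-Q-1))"
  have Ge: "1 - x * (kr / r + (2 * x / r^2) * ((P - Q - 1) / P)) = Gp / (r^2 * P)"
    unfolding Gp_def using r0' P0 by (simp add: field_simps power2_eq_square)
  have Gp0: "Gp \<noteq> 0" using D0 gam Ge unfolding r_def by auto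
  have te: "t = -(1+x)/(2*x)" by (rule ht)
  have casp: "x*P^2 + (1+x)*P*Q + x*Q^2 - x = 0"
  proof -
    have "x * (P^2 - Q*(2*t*P - Q)) = x" using cas by simp
    moreover have "x * (P^2 - Q*(2*t*P - Q)) = x*P^2 + (1+x)*P*Q + x*Q^2" unfolding te using x0
      by (simp add: field_simps power2_eq_square)
    ultimately show ?thesis by simp
  qed
  define NA where "NA = P + 2*x - 3*x*P + 2*x*kr"
  define NB where "NB = (-8)*P^2 + (-16)*x*P + (-24)*x*P^2 + (-16)*x*kr*P + (8)*x*kr*P^2 + (-112)*x^2*P + (-48)*x^2*P*Q + (88)*x^2*P^2 + (-80)*x^2*kr*P + (16)*x^2*kr^2*P + (-32)*x^3*Q + (-32)*x^3*Q^2 + (-64)*x^3*P + (16)*x^3*P*Q + (136)*x^3*P^2 + (-32)*x^3*kr + (-32)*x^3*kr*Q + (-64)*x^3*kr*P + (-72)*x^3*kr*P^2 + (48)*x^3*kr^2*P"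
  have iA: "(- (((kr+1)*Q - kr*t*P) * (2*x^2) / (-(r*m)))/(x*P) + 1 - kr)
      - (1 + 2*x*(kr+1)*(Q-1)/(r*m*P) - r3*(kr*x+1)/(r*m)) = NA / (P*r*m)"
    unfolding te NA_def using x0 r0' P0
    apply (simp add: field_simps)
    apply (simp add: r_def m_def r3_def algebra_simps power2_eq_square)
    done
  define aL where "aL = - (((kr+1)*Q - kr*t*P) * (2*x^2) / (-(r*m)))/(x*P) + 1 - kr"
  define aR where "aR = 1 + 2*x*(kr+1)*(Q-1)/(r*m*P) - r3*(kr*x+1)/(r*m)"
  define bL where "bL = x * ((kr - 4*(-x*(P - Q - 1)/r)/P + (2*((kr - Q*((2*t*P - Q) - Q)/2) * (2*x^2) / (-(r*m))) + 2*(((kr+1)*Q - kr*t*P) * (2*x^2) / (-(r*m))))/P^2)/r^2)"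
  define bR where "bR = r3/(r*m) + 2*x*(kr+1)*(r - x*(1+kr-P))/(r^2*m*P)"
  define N1 where "N1 = -2*x*P*Q - 2*x*kr*P - 4*x^2*Q - 4*x^2*Q^2 - 2*x^2*P*Q - 4*x^2*kr - 4*x^2*kr*Q - 2*x^2*kr*P"
  have hT1: "2*((kr - Q*((2*t*P - Q) - Q)/2) * (2*x^2) / (-(r*m))) + 2*(((kr+1)*Q - kr*t*P) * (2*x^2) / (-(r*m))) = N1/(r*m)"
    unfolding te N1_def using x0 r0'
    apply (simp add: field_simps)
    apply (simp add: r_def m_def algebra_simps power2_eq_square)
    done
  define Num where "Num = x*(kr*r*m*P^2 + 4*x*(P-Q-1)*m*P + N1) - (r3*r*P + 2*x*(kr+1)*(r - x*(1+kr-P)))*r*P"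
  have hbL: "bL - bR = Num/(r^3*m*P^2)"
    unfolding bL_def bR_def hT1 Num_def using x0 r0' P0
    by (simp add: field_simps power2_eq_square power3_eq_cube)
  have hNum: "Num = NB/8"
    unfolding Num_def NB_def N1_def r_def m_def r3_def
    by (simp add: algebra_simps power2_eq_square power3_eq_cube)
  have iB: "bL - bR = NB / (8*P^2*r^3*m)"
    unfolding hbL hNum by (simp add: field_simps)
  have iC: "8*NA*Gp + NB = -32*x^2 * (x*P^2 + (1+x)*P*Q + x*Q^2 - x)"
    unfolding NA_def NB_def Gp_def r_def
    by (simp add: algebra_simps power2_eq_square power3_eq_cube)
  have iD: "8*NA*Gp + NB = 0" using iC casp by simp
  have Rform: "1 + r3 / (r * m) *
     ( 1 / (Gp / (r^2 * P))
       + (2 * x * (kr + 1)) / (r3 * P) *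
         ( (1 - x * ((1 + kr - P) / r)) / (Gp / (r^2 * P))
           + Q - 1)
       - kr * x - 1) = aR + bR * (r^2*P/Gp)"
    unfolding aR_def bR_def using x0 r0' P0 Gp0
    by (simp add: field_simps power2_eq_square)
  have Lform: "- (((kr+1)*Q - kr*t*P) * (2*x^2) / (-(r*m)))/(x*P)
     + x * ((kr - 4*(-x*(P - Q - 1)/r)/P + (2*((kr - Q*((2*t*P - Q) - Q)/2) * (2*x^2) / (-(r*m))) + 2*(((kr+1)*Q - kr*t*P) * (2*x^2) / (-(r*m))))/P^2)/r^2) / (Gp / (r^2 * P)) + 1 - kr
     = aL + bL * (r^2*P/Gp)"
  proof -
    have gen: "A + B/(Gp/(r^2*P)) + 1 - kr = (A + 1 - kr) + B*(r^2*P/Gp)" for A B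
      using Gp0 P0 r0' by (simp add: field_simps)
    show ?thesis unfolding aL_def bL_def by (rule gen)
  qed
  have "aL + bL * (r^2*P/Gp) - (aR + bR * (r^2*P/Gp)) = (aL - aR) + (bL - bR) * (r^2*P/Gp)"
    by (simp add: left_diff_distrib diff_divide_distrib)
  also have "\<dots> = NA/(P*r*m) + NB / (8*P^2*r^3*m) * (r^2*P/Gp)"
    using iA iB unfolding aL_def aR_def by simp
  also have "\<dots> = (8*NA*Gp + NB) / (8*P*r*m*Gp)"
    using P0 r0' Gp0 by (simp add: field_simps power2_eq_square power3_eq_cube)
  also have "\<dots> = 0" using iD by simp
  finally have LR: "aL + bL * (r^2*P/Gp) = aR + bR * (r^2*P/Gp)" by simp
  show ?thesis
    unfolding r_def[symmetric] m_def[symmetric] r3_def[symmetric]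
    unfolding gam
    unfolding Ge
    unfolding S3e' Ce' S1e'
    unfolding Lform Rform LR ..
qed



lemma Wc_summable:
  assumes "real k * \<bar>x\<bar> < 1"
  shows "summable (\<lambda>n. real (Wc k n a b) * x^n)"
proof (rule summable_comparison_test)
  show "\<exists>N. \<forall>n\<ge>N. norm (real (Wc k n a b) * x^n) \<le> (real k * \<bar>x\<bar>)^n"
  proof (intro exI allI impI)
    fix n :: nat
    have "real (Wc k n a b) \<le> real k ^ n" using Wc_bound[of k n a b]
      by (metis of_nat_le_iff of_nat_power)
    then have "real (Wc k n a b) * \<bar>x\<bar>^n \<le> real k ^ n * \<bar>x\<bar>^n"
      by (rule mult_right_mono) simp
    then show "norm (real (Wc k n a b) * x^n) \<le> (real k * \<bar>x\<bar>)^n"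
      by (simp add: abs_mult power_abs power_mult_distrib)
  qed
  show "summable (\<lambda>n. (real k * \<bar>x\<bar>)^n)"
    by (rule summable_geometric) (use assms in auto)
qed

definition fser :: "nat \<Rightarrow> real \<Rightarrow> nat \<Rightarrow> nat \<Rightarrow> real" where
  "fser k x a b = (\<Sum>n. real (Wc k n a b) * x^n)"

lemma fser_row:
  assumes "real k * \<bar>x\<bar> < 1"
  shows "fser k x a b = (if a = b then 1 else 0) + x * (\<Sum>c\<in>{c\<in>{1..k}. farr a c}. fser k x c b)"
proof -
  let ?F = "{c\<in>{1..k}. farr a c}"
  define f where "f n = real (Wc k n a b) * x^n" for n
  define g where "g c n = real (Wc k n c b) * x^n" for c n
  have sf: "summable f" unfolding f_def by (rule Wc_summable[OF assms])
  have sg: "\<And>c. summable (g c)" unfolding g_def by (rule Wc_summable[OF assms])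
  have fs: "f (Suc n) = x * (\<Sum>c\<in>?F. g c n)" for n
    unfolding f_def g_def by (simp add: sum_distrib_left sum_distrib_right algebra_simps)
  have "fser k x a b = suminf f" unfolding fser_def f_def ..
  also have "\<dots> = f 0 + (\<Sum>n. f (Suc n))" using suminf_split_head[OF sf] by simp
  also have "(\<Sum>n. f (Suc n)) = (\<Sum>n. x * (\<Sum>c\<in>?F. g c n))" unfolding fs ..
  also have "\<dots> = x * (\<Sum>n. \<Sum>c\<in>?F. g c n)"
    by (rule suminf_mult) (rule summable_sum, rule sg)
  also have "(\<Sum>n. \<Sum>c\<in>?F. g c n) = (\<Sum>c\<in>?F. \<Sum>n. g c n)"
    by (rule suminf_sum) (rule sg)
  also have "\<dots> = (\<Sum>c\<in>?F. fser k x c b)" unfolding fser_def g_def ..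
  finally show ?thesis unfolding f_def by simp
qed

lemma uniq:
  fixes g :: "nat \<Rightarrow> real"
  assumes k: "k \<ge> 1" and xk: "real k * \<bar>x\<bar> < 1"
    and rows: "\<And>a. a \<in> {1..k} \<Longrightarrow> g a = x * (\<Sum>c\<in>{c\<in>{1..k}. farr a c}. g c)"
    and a: "a \<in> {1..k}"
  shows "g a = 0"
proof -
  define M where "M = Max ((\<lambda>a. \<bar>g a\<bar>) ` {1..k})"
  have fin: "finite ((\<lambda>a. \<bar>g a\<bar>) ` {1..k})" by simp
  have ne: "(\<lambda>a. \<bar>g a\<bar>) ` {1..k} \<noteq> {}" using k by auto
  have le: "\<bar>g c\<bar> \<le> M" if "c \<in> {1..k}" for c
    unfolding M_def using that fin by (intro Max_ge) auto
  obtain a0 where a0: "a0 \<in> {1..k}" "M = \<bar>g a0\<bar>"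
    using Max_in[OF fin ne] unfolding M_def by auto
  have "\<bar>g a0\<bar> = \<bar>x\<bar> * \<bar>\<Sum>c\<in>{c\<in>{1..k}. farr a0 c}. g c\<bar>"
    using rows[OF a0(1)] by (simp add: abs_mult)
  also have "\<dots> \<le> \<bar>x\<bar> * (\<Sum>c\<in>{c\<in>{1..k}. farr a0 c}. \<bar>g c\<bar>)"
    by (rule mult_left_mono) (auto intro: sum_abs)
  also have "\<dots> \<le> \<bar>x\<bar> * (\<Sum>c\<in>{c\<in>{1..k}. farr a0 c}. M)"
    by (rule mult_left_mono, rule sum_mono, rule le) auto
  also have "\<dots> = \<bar>x\<bar> * (real (card {c\<in>{1..k}. farr a0 c}) * M)" by simp
  also have "\<dots> \<le> \<bar>x\<bar> * (real k * M)"
  proof -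
    have "card {c\<in>{1..k}. farr a0 c} \<le> card {1..k}" by (rule card_mono) auto
    then have "real (card {c\<in>{1..k}. farr a0 c}) \<le> real k" by simp
    moreover have "M \<ge> 0" using a0 by simp
    ultimately show ?thesis by (intro mult_left_mono mult_right_mono) auto
  qed
  finally have "M \<le> (real k * \<bar>x\<bar>) * M" using a0 by (simp add: algebra_simps)
  moreover have "M \<ge> 0" using a0 by simp
  ultimately have "M = 0" using xk
    by (metis mult_less_cancel_right2 not_less order.not_eq_order_implies_strict)
  then show ?thesis using le[OF a] by simp
qed




lemma sum_rev1: "(\<Sum>a=1..k. f (Suc k - a)) = (\<Sum>a=1..k. (f a :: real))"
  using sum.atLeastAtMost_rev[of f 1 k] by simp

lemma sq_helper:
  fixes A B P R :: real
  assumes "P \<noteq> 0" "R \<noteq> 0"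
  shows "((1 - (A + B) / P) / R) * ((1 - (A + B) / P) / R)
    = (1 - 2 * (A + B) / P + (A ^ 2 + 2 * (A * B) + B ^ 2) / P^2) / R^2"
  using assms by (simp add: field_simps power2_eq_square)

lemma point_facts:
  fixes k :: nat and x :: real
  assumes k: "k \<ge> 2" and x0: "x \<noteq> 0" and xs: "\<bar>x\<bar> < 1 / (10 * real k)"
  shows "(\<lambda>n. real (cyc_hertz_count n k) * x ^ n) sums cyc_hertz_gf k x"
proof -
  define t where "t = psi x"
  have kpos: "real k \<ge> 2" using k by simp
  have x20: "\<bar>x\<bar> < 1/20"
  proof -
    have "1 / (10 * real k) \<le> 1/20" using kpos by (simp add: field_simps)
    then show ?thesis using xs by simp
  qed
  have xk: "real k * \<bar>x\<bar> < 1"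
  proof -
    have "real k * \<bar>x\<bar> \<le> real k * (1 / (10 * real k))" using xs kpos by (intro mult_left_mono) auto
    also have "\<dots> = 1/10" using kpos by simp
    finally show ?thesis by simp
  qed
  have ht: "t = -(1+x)/(2*x)" unfolding t_def psi_def by simp
  have hx: "2*t*x = -(1+x)" unfolding ht using x0 by simp
  have r0: "1 + 3*x \<noteq> 0" and m1: "1 - x \<noteq> 0" and r3: "1 - 3*x \<noteq> 0" using x20 by auto
  have r_ge: "\<bar>1 + 3*x\<bar> \<ge> 1/2" using x20 by auto
  have tge: "\<bar>t\<bar> \<ge> 1"
  proof -
    have "\<bar>t\<bar> * (2*\<bar>x\<bar>) = \<bar>1+x\<bar>" using hx by (metis abs_minus_cancel abs_mult mult.commute mult.left_commute abs_numeral)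
    moreover have "\<bar>1+x\<bar> \<ge> 2*\<bar>x\<bar>" using x20 by auto
    ultimately have "\<bar>t\<bar> * (2*\<bar>x\<bar>) \<ge> 1 * (2*\<bar>x\<bar>)" by simp
    then show ?thesis using x0 by (simp add: mult_le_cancel_right)
  qed
  define Vv where "Vv = Vm t"
  define Pp where "Pp = Vv (Suc k)"
  have P1: "\<bar>Pp\<bar> \<ge> 1" unfolding Pp_def Vv_def by (rule Vm_ge1[OF tge])
  then have Pp0: "Pp \<noteq> 0" by auto
  have Vle: "\<bar>Vv a\<bar> \<le> \<bar>Pp\<bar>" if "a \<le> Suc k" for a
    unfolding Pp_def Vv_def by (rule Vm_mono_le[OF tge that])
  have uub: "\<bar>uu t x k a\<bar> \<le> 6" if "a \<in> {1..k}" for a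
  proof -
    have "\<bar>(Vv a + Vv (Suc k - a)) / Pp\<bar> \<le> 2"
    proof -
      have "\<bar>Vv a + Vv (Suc k - a)\<bar> \<le> 2 * \<bar>Pp\<bar>" using Vle[of a] Vle[of "Suc k - a"] that by auto
      then show ?thesis using Pp0 by (simp add: abs_divide divide_le_eq)
    qed
    then have n1: "\<bar>1 - (Vv a + Vv (Suc k - a)) / Pp\<bar> \<le> 3" by linarith
    have "\<bar>uu t x k a\<bar> = \<bar>1 - (Vv a + Vv (Suc k - a)) / Pp\<bar> / \<bar>1 + 3*x\<bar>"
      unfolding uu_def Vv_def Pp_def by (simp add: abs_divide)
    also have "\<dots> \<le> 3 / (1/2)"
      using n1 r_ge by (intro frac_le) auto
    finally show ?thesis by simp
  qed
  have ssb: "\<bar>ss t x k\<bar> \<le> 6 * real k"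
  proof -
    have "\<bar>ss t x k\<bar> \<le> (\<Sum>a=1..k. \<bar>uu t x k a\<bar>)" unfolding ss_def by (rule sum_abs)
    also have "\<dots> \<le> (\<Sum>a=1..k. 6)" by (rule sum_mono) (rule uub)
    finally show ?thesis by simp
  qed
  have D0: "1 - x * ss t x k \<noteq> 0"
  proof -
    have "\<bar>x * ss t x k\<bar> \<le> \<bar>x\<bar> * (6 * real k)" unfolding abs_mult by (rule mult_left_mono[OF ssb]) simp
    also have "\<dots> < 1"
    proof -
      have "\<bar>x\<bar> * (6 * real k) = 6 * (real k * \<bar>x\<bar>)" by simp
      moreover have "real k * \<bar>x\<bar> < 1/10"
      proof -
        have "real k * \<bar>x\<bar> < real k * (1 / (10 * real k))" using xs kpos by (intro mult_strict_left_mono) auto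
        also have "\<dots> = 1/10" using kpos by simp
        finally show ?thesis .
      qed
      ultimately show ?thesis by linarith
    qed
    finally show ?thesis by auto
  qed
  interpret sysl t x k
    by unfold_locales (use hx x0 Pp0 r0 D0 in \<open>auto simp: Pp_def Vv_def\<close>)
  have fm: "fser k x a b = mm t x k a b" if a: "a \<in> {1..k}" and b: "b \<in> {1..k}" for a b
  proof -
    define g where "g c = fser k x c b - mm t x k c b" for c
    have "g a = 0"
    proof (rule uniq[of k x g a])
      show "1 \<le> k" using k by simp
      show "real k * \<bar>x\<bar> < 1" by (rule xk)
      show "a \<in> {1..k}" by (rule a)
      fix a' assume a': "a' \<in> {1..k}"
      show "g a' = x * (\<Sum>c\<in>{c\<in>{1..k}. farr a' c}. g c)"
        unfolding g_def fser_row[OF xk, of a' b] mm_row[OF a' b]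
        by (simp add: sum_subtractf algebra_simps)
    qed
    then show ?thesis unfolding g_def by simp
  qed
  have sums1: "(\<lambda>n. \<Sum>a\<in>{1..k}. real (Wc k n a a) * x^n) sums (\<Sum>a\<in>{1..k}. mm t x k a a)"
  proof -
    have "(\<lambda>n. \<Sum>a\<in>{1..k}. real (Wc k n a a) * x^n) sums (\<Sum>a\<in>{1..k}. fser k x a a)"
      by (rule sums_sum) (unfold fser_def, rule summable_sums, rule Wc_summable[OF xk])
    moreover have "(\<Sum>a\<in>{1..k}. fser k x a a) = (\<Sum>a\<in>{1..k}. mm t x k a a)"
      by (rule sum.cong) (auto intro: fm)
    ultimately show ?thesis by simp
  qed
  have sums2: "(\<lambda>n. if n = 0 then 1 - real k else 0) sums (1 - real k)"
    using sums_single[of 0 "\<lambda>_. 1 - real k"] by simp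
  have cnt: "real (cyc_hertz_count n k) * x ^ n
      = (\<Sum>a\<in>{1..k}. real (Wc k n a a) * x^n) + (if n = 0 then 1 - real k else 0)" for n
  proof (cases n)
    case 0 then show ?thesis using count_0 by simp
  next
    case (Suc m)
    then show ?thesis using count_Suc[of m k] by (simp add: sum_distrib_right)
  qed
  have sums3: "(\<lambda>n. real (cyc_hertz_count n k) * x ^ n) sums ((\<Sum>a\<in>{1..k}. mm t x k a a) + (1 - real k))"
    unfolding cnt by (rule sums_add[OF sums1 sums2])
  define Q where "Q = Vv k"
  define S1 where "S1 = (\<Sum>a=1..k. Vv a)"
  define S3 where "S3 = (\<Sum>a=1..k. Vv a ^ 2)"
  define C where "C = (\<Sum>a=1..k. Vv a * Vv (Suc k - a))"
  have hS1: "2*(t-1)*S1 = Pp - Q - 1" unfolding S1_def Pp_def Q_def Vv_def using S1[of t k] by simp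
  have hV2: "Vv (Suc (Suc k)) = 2*t*Pp - Q" unfolding Vv_def Pp_def Q_def by (rule Vm_rec)
  have hS3: "2*(1-t^2)*S3 = real k - Q*((2*t*Pp - Q) - Q)/2"
    unfolding S3_def using S3[of t k] hV2 unfolding Vv_def Q_def by simp
  have hC: "2*(1-t^2)*C = (real k+1)*Q - real k*t*Pp"
    unfolding C_def Q_def Pp_def Vv_def using conv_closed[of t k] by simp
  have cas: "Pp^2 - Q*(2*t*Pp - Q) = 1" using cassini[of t k] hV2 unfolding Pp_def Q_def Vv_def by simp
  have sum_bet: "(\<Sum>a=1..k. bet t x k a a) = - C/(x*Pp)"
    unfolding C_def bet_def Pp_def Vv_def by (simp add: sum_divide_distrib sum_negf)
  have uue: "uu t x k a = (1 - (Vv a + Vv (Suc k - a)) / Pp) / (1 + 3*x)" for a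
    unfolding uu_def Vv_def Pp_def ..
  have ss_e: "ss t x k = (real k - 2*S1/Pp)/(1+3*x)"
  proof -
    have "ss t x k = (\<Sum>a=1..k. 1 - (Vv a + Vv (Suc k - a)) / Pp) / (1 + 3*x)"
      unfolding ss_def uue by (simp add: sum_divide_distrib)
    also have "(\<Sum>a=1..k. 1 - (Vv a + Vv (Suc k - a)) / Pp) = real k - ((\<Sum>a=1..k. Vv a) + (\<Sum>a=1..k. Vv (Suc k - a)))/Pp"
      by (simp add: sum_subtractf sum.distrib sum_divide_distrib[symmetric])
    also have "\<dots> = real k - 2*S1/Pp" unfolding sum_rev1 S1_def by simp
    finally show ?thesis .
  qed
  have sq_e: "(\<Sum>a=1..k. uu t x k a * uu t x k a) = (real k - 4*S1/Pp + (2*S3 + 2*C)/Pp^2)/(1+3*x)^2"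
  proof -
    have e: "uu t x k a * uu t x k a = (1 - 2 * (Vv a + Vv (Suc k - a)) / Pp
        + (Vv a ^ 2 + 2 * (Vv a * Vv (Suc k - a)) + Vv (Suc k - a) ^ 2) / Pp^2) / (1+3*x)^2" for a
      unfolding uue using sq_helper[OF Pp0 r0] .
    have "(\<Sum>a=1..k. uu t x k a * uu t x k a) = (\<Sum>a=1..k. 1 - 2 * (Vv a + Vv (Suc k - a)) / Pp
        + (Vv a ^ 2 + 2 * (Vv a * Vv (Suc k - a)) + Vv (Suc k - a) ^ 2) / Pp^2) / (1+3*x)^2"
      unfolding e by (simp add: sum_divide_distrib)
    also have "(\<Sum>a=1..k. 1 - 2 * (Vv a + Vv (Suc k - a)) / Pp
        + (Vv a ^ 2 + 2 * (Vv a * Vv (Suc k - a)) + Vv (Suc k - a) ^ 2) / Pp^2)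
      = real k - 2 * ((\<Sum>a=1..k. Vv a) + (\<Sum>a=1..k. Vv (Suc k - a))) / Pp
        + ((\<Sum>a=1..k. Vv a ^ 2) + 2 * (\<Sum>a=1..k. Vv a * Vv (Suc k - a)) + (\<Sum>a=1..k. Vv (Suc k - a) ^ 2)) / Pp^2"
      by (simp add: sum.distrib sum_subtractf sum_divide_distrib[symmetric] sum_distrib_left[symmetric])
    also have "\<dots> = real k - 4*S1/Pp + (2*S3 + 2*C)/Pp^2"
      unfolding sum_rev1[of "\<lambda>a. Vv a ^ 2"] sum_rev1[of Vv] S1_def S3_def C_def by simp
    finally show ?thesis .
  qed
  have tot: "(\<Sum>a\<in>{1..k}. mm t x k a a) = - C/(x*Pp) + x * ((real k - 4*S1/Pp + (2*S3 + 2*C)/Pp^2)/(1+3*x)^2) / (1 - x * ((real k - 2*S1/Pp)/(1+3*x)))"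
  proof -
    have "(\<Sum>a\<in>{1..k}. mm t x k a a) = (\<Sum>a=1..k. bet t x k a a) + x * (\<Sum>a=1..k. uu t x k a * uu t x k a) / (1 - x * ss t x k)"
      unfolding mm_def by (simp add: sum.distrib sum_divide_distrib[symmetric] sum_distrib_left[symmetric] mult.assoc)
    then show ?thesis unfolding sum_bet sq_e ss_e .
  qed
  have D0': "1 - x * ((real k - 2*S1/Pp)/(1+3*x)) \<noteq> 0" using D0 ss_e by simp
  have gf: "cyc_hertz_gf k x = 1 + (1 - 3 * x) / ((1 + 3 * x) * (1 - x)) *
     ( 1 / (1 - x * (real k / (1 + 3 * x) + (2 * x / (1 + 3 * x)^2) * ((Pp - Q - 1) / Pp)))
       + (2 * x * (real k + 1)) / ((1 - 3 * x) * Pp) *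
         ( (1 - x * ((1 + real k - Pp) / (1 + 3 * x))) / (1 - x * (real k / (1 + 3 * x) + (2 * x / (1 + 3 * x)^2) * ((Pp - Q - 1) / Pp)))
           + Q - 1)
       - real k * x - 1)"
  proof -
    have c1: "chebU k (psi x) = Pp" unfolding Pp_def Vv_def t_def chebU_Vm ..
    have c2: "chebU (k - 1) (psi x) = Q" unfolding Q_def Vv_def t_def chebU_Vm using k by simp
    show ?thesis unfolding cyc_hertz_gf_def gamma0_def c1 c2 ..
  qed
  have fin: "(\<Sum>a\<in>{1..k}. mm t x k a a) + (1 - real k) = cyc_hertz_gf k x"
    unfolding gf using final_id[OF x0 r0 m1 r3 Pp0 ht D0' hS1 hS3 hC cas] unfolding tot by simp
  show ?thesis using sums3 unfolding fin .
qed

theorem mainTheorem4: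
  fixes k :: nat
  assumes "k \<ge> 2"
  shows "\<forall>\<^sub>F x in at (0::real).
           (\<lambda>n. real (cyc_hertz_count n k) * x ^ n) sums cyc_hertz_gf k x"
proof -
  have kp: "1 / (10 * real k) > 0" using assms by simp
  show ?thesis
    unfolding eventually_at
    by (rule exI[of _ "1 / (10 * real k)"]) (use kp point_facts[OF assms] in auto)
qed


end
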